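(* Let $\mathbb O=\{0,1,\dots,M\}$ with integer $M\ge1$, and $\theta=0$. For every $x(0)\in\mathbb O^n$: if there exists a finite legal update sequence from $x(0)$ along which the trajectory reaches the consensus state $(0,\dots,0)$, then there exists a finite legal update sequence from $x(0)$ along which the system reaches a state $y$ (not necessarily an equilibrium) with $y_i=1$ for every $i$ with $x_i(0)>0$.
   Context: Let $n\ge1$, $\mathcal V=\{1,\dots,n\}$, and let $W=(w_{ij})$ be an $n\times n$ row-stochastic matrix. For $x\in\mathbb O^n$, $i\in\mathcal V$, $z\in\mathbb O$, define $C^i_{\mathrm{social}}(z;x)=\sum_{j=1}^n w_{ij}|z-x_j|$ and $P_i(x)=\{z\in\mathbb O: C^i_{\mathrm{social}}(z;x)\le C^i_{\mathrm{social}}(x_i;x),\ |z-\theta|\le |x_i-\theta|\}$. A legal update sequence from $x(0)$ is a finite sequence $(i_1,z_1),\dots,(i_T,z_T)$ with $i_t\in\mathcal V$, generating $x(1),\dots,x(T)$ where $x(t)$ is obtained from $x(t-1)$ by setting coordinate $i_t$ to $z_t$, such that $z_t\in P_{i_t}(x(t-1))$ for every $t$. *)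

theory Defs
  imports Complex_Main
begin

text \<open>Agents are indexed by {1..n}; a state is a function nat => int whose
  coordinates outside {1..n} are irrelevant. The opinion set is O = {0..M}.
  W is given as a function w :: nat => nat => real.\<close>

definition row_stochastic :: "nat \<Rightarrow> (nat \<Rightarrow> nat \<Rightarrow> real) \<Rightarrow> bool" where
  "row_stochastic n w \<longleftrightarrow>
     (\<forall>i\<in>{1..n}. (\<forall>j\<in>{1..n}. w i j \<ge> 0) \<and> (\<Sum>j=1..n. w i j) = 1)"

definition C_social :: "nat \<Rightarrow> (nat \<Rightarrow> nat \<Rightarrow> real) \<Rightarrow> nat \<Rightarrow> int \<Rightarrow> (nat \<Rightarrow> int) \<Rightarrow> real" where
  "C_social n w i z x = (\<Sum>j=1..n. w i j * real_of_int \<bar>z - x j\<bar>)"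

definition P_set :: "nat \<Rightarrow> (nat \<Rightarrow> nat \<Rightarrow> real) \<Rightarrow> int \<Rightarrow> int \<Rightarrow> nat \<Rightarrow> (nat \<Rightarrow> int) \<Rightarrow> int set" where
  "P_set n w M \<theta> i x = {z \<in> {0..M}. C_social n w i z x \<le> C_social n w i (x i) x
                                   \<and> \<bar>z - \<theta>\<bar> \<le> \<bar>x i - \<theta>\<bar>}"

definition run :: "(nat \<Rightarrow> int) \<Rightarrow> (nat \<times> int) list \<Rightarrow> nat \<Rightarrow> (nat \<Rightarrow> int)" where
  "run x0 seq t = foldl (\<lambda>x (i, z). x(i := z)) x0 (take t seq)"

definition legal_seq :: "nat \<Rightarrow> (nat \<Rightarrow> nat \<Rightarrow> real) \<Rightarrow> int \<Rightarrow> int \<Rightarrow> (nat \<Rightarrow> int) \<Rightarrow> (nat \<times> int) list \<Rightarrow> bool" where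
  "legal_seq n w M \<theta> x0 seq \<longleftrightarrow>
     (\<forall>t < length seq. fst (seq ! t) \<in> {1..n} \<and>
                       snd (seq ! t) \<in> P_set n w M \<theta> (fst (seq ! t)) (run x0 seq t))"

end

theory Submission
  imports Defs
begin

definition clip :: "nat \<Rightarrow> (nat \<Rightarrow> int) \<Rightarrow> (nat \<Rightarrow> int) \<Rightarrow> (nat \<Rightarrow> int)" where
  "clip n x0 x = (\<lambda>j. if j \<in> {1..n} \<and> x0 j > 0 then max (x j) 1 else x j)"

definition gmap :: "nat \<Rightarrow> (nat \<Rightarrow> int) \<Rightarrow> nat \<times> int \<Rightarrow> nat \<times> int" where
  "gmap n x0 p = (fst p, if fst p \<in> {1..n} \<and> x0 (fst p) > 0 then max (snd p) 1 else snd p)"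

lemma run_Suc:
  assumes "t < length seq"
  shows "run x0 seq (Suc t) = (run x0 seq t)(fst (seq ! t) := snd (seq ! t))"
  using assms by (simp add: run_def take_Suc_conv_app_nth split: prod.splits)

lemma foldl_clip:
  "foldl (\<lambda>x (i, z). x(i := z)) (clip n x0 x) (map (gmap n x0) l)
   = clip n x0 (foldl (\<lambda>x (i, z). x(i := z)) x l)"
proof (induction l arbitrary: x)
  case Nil then show ?case by simp
next
  case (Cons p l)
  have "(clip n x0 x)(fst p := snd (gmap n x0 p)) = clip n x0 (x(fst p := snd p))"
    by (auto simp: clip_def gmap_def)
  obtain a b where p: "p = (a, b)" by (cases p)
  have "foldl (\<lambda>x (i, z). x(i := z)) (clip n x0 x) (map (gmap n x0) (p # l))
      = foldl (\<lambda>x (i, z). x(i := z)) ((clip n x0 x)(fst p := snd (gmap n x0 p))) (map (gmap n x0) l)"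
    by (simp add: p gmap_def)
  also have "\<dots> = foldl (\<lambda>x (i, z). x(i := z)) (clip n x0 (x(fst p := snd p))) (map (gmap n x0) l)"
    using \<open>(clip n x0 x)(fst p := snd (gmap n x0 p)) = _\<close> by simp
  also have "\<dots> = clip n x0 (foldl (\<lambda>x (i, z). x(i := z)) (x(fst p := snd p)) l)"
    by (rule Cons.IH)
  also have "\<dots> = clip n x0 (foldl (\<lambda>x (i, z). x(i := z)) x (p # l))"
    by (simp add: p)
  finally show ?case .
qed

lemma run_clip:
  assumes "\<forall>j. x0 j > 0 \<longrightarrow> x0 j \<ge> 1"
  shows "run x0 (map (gmap n x0) seq) t = clip n x0 (run x0 seq t)"
proof -
  have "clip n x0 x0 = x0" using assms by (auto simp: clip_def max_def)
  then show ?thesis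
    using foldl_clip[of n x0 x0 "take t seq"] by (simp add: run_def take_map)
qed

lemma invariant:
  assumes "legal_seq n w M 0 x0 seq" "\<forall>i\<in>{1..n}. x0 i \<in> {0..M}"
  shows "t \<le> length seq \<Longrightarrow> \<forall>j\<in>{1..n}. 0 \<le> run x0 seq t j \<and> run x0 seq t j \<le> x0 j"
proof (induction t)
  case 0 then show ?case using assms(2) by (simp add: run_def)
next
  case (Suc t)
  then have tl: "t < length seq" by simp
  have IH: "\<forall>j\<in>{1..n}. 0 \<le> run x0 seq t j \<and> run x0 seq t j \<le> x0 j" using Suc by simp
  from assms(1) tl have i: "fst (seq!t) \<in> {1..n}"
    and z: "snd (seq ! t) \<in> P_set n w M 0 (fst (seq ! t)) (run x0 seq t)"
    unfolding legal_seq_def by auto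
  from z have "0 \<le> snd (seq!t)" "snd (seq!t) \<le> run x0 seq t (fst (seq!t))"
    using IH i unfolding P_set_def by auto
  moreover have "run x0 seq t (fst (seq!t)) \<le> x0 (fst (seq!t))" using IH i by blast
  ultimately have "snd (seq!t) \<le> x0 (fst (seq!t))" by linarith
  then show ?case using IH i run_Suc[OF tl, of x0] \<open>0 \<le> snd (seq!t)\<close> by auto
qed

lemma term_conv:
  fixes k a :: real assumes "k \<ge> 1"
  shows "k * \<bar>1 - a\<bar> \<le> (k - 1) * \<bar>a\<bar> + \<bar>k - a\<bar>"
proof -
  have "k * \<bar>1 - a\<bar> = \<bar>(k - 1) * (0 - a) + (k - a)\<bar>"
  proof -
    have "k * \<bar>1 - a\<bar> = \<bar>k * (1 - a)\<bar>" using assms by (simp add: abs_mult)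
    also have "k * (1 - a) = (k - 1) * (0 - a) + (k - a)" by (simp add: algebra_simps)
    finally show ?thesis .
  qed
  also have "\<dots> \<le> \<bar>(k - 1) * (0 - a)\<bar> + \<bar>k - a\<bar>" by (rule abs_triangle_ineq)
  also have "\<bar>(k - 1) * (0 - a)\<bar> = (k - 1) * \<bar>a\<bar>" using assms by (simp add: abs_mult)
  finally show ?thesis .
qed

lemma conv_step:
  assumes "row_stochastic n w" "i \<in> {1..n}" "(k::int) \<ge> 1"
    and "C_social n w i 0 x \<le> C_social n w i k x"
  shows "C_social n w i 1 x \<le> C_social n w i k x"
proof -
  have nn: "\<forall>j\<in>{1..n}. w i j \<ge> 0" using assms(1,2) unfolding row_stochastic_def by auto
  have "real_of_int k * C_social n w i 1 x \<le> (real_of_int k - 1) * C_social n w i 0 x + C_social n w i k x"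
    unfolding C_social_def sum_distrib_left sum.distrib[symmetric]
  proof (rule sum_mono)
    fix j assume j: "j \<in> {1..n}"
    have "real_of_int k * real_of_int \<bar>1 - x j\<bar> \<le> (real_of_int k - 1) * real_of_int \<bar>0 - x j\<bar> + real_of_int \<bar>k - x j\<bar>"
      using term_conv[of "real_of_int k" "real_of_int (x j)"] assms(3) by simp
    then have "w i j * (real_of_int k * real_of_int \<bar>1 - x j\<bar>) \<le> w i j * ((real_of_int k - 1) * real_of_int \<bar>0 - x j\<bar> + real_of_int \<bar>k - x j\<bar>)"
      using nn j by (intro mult_left_mono) auto
    then show "real_of_int k * (w i j * real_of_int \<bar>1 - x j\<bar>) \<le> (real_of_int k - 1) * (w i j * real_of_int \<bar>0 - x j\<bar>) + w i j * real_of_int \<bar>k - x j\<bar>"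
      by (simp add: algebra_simps)
  qed
  also have "\<dots> \<le> (real_of_int k - 1) * C_social n w i k x + C_social n w i k x"
    using assms(3,4) by (intro add_right_mono mult_left_mono) auto
  finally have "real_of_int k * C_social n w i 1 x \<le> real_of_int k * C_social n w i k x"
    by (simp add: algebra_simps)
  then show ?thesis using assms(3) by simp
qed

lemma C_clip:
  assumes "v \<ge> 1" "\<forall>j\<in>{1..n}. x j \<ge> 0"
  shows "C_social n w i v (clip n x0 x) = C_social n w i v x
     - (\<Sum>j=1..n. w i j * (if x0 j > 0 \<and> x j < 1 then 1 else 0))"
  unfolding C_social_def sum_subtractf[symmetric]
proof (rule sum.cong)
  fix j assume j: "j \<in> {1..n}"
  then show "w i j * real_of_int \<bar>v - clip n x0 x j\<bar> =
         w i j * real_of_int \<bar>v - x j\<bar> - w i j * (if 0 < x0 j \<and> x j < 1 then 1 else 0)"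
  proof -
    have "x j \<ge> 0" using assms(2) j by blast
    have c: "clip n x0 x j = (if x0 j > 0 then max (x j) 1 else x j)"
      using j by (simp add: clip_def)
    show ?thesis
    proof (cases "x0 j > 0 \<and> x j < 1")
      case True
      then have "x j = 0" using \<open>x j \<ge> 0\<close> by simp
      then show ?thesis using True c assms(1) by (simp add: algebra_simps)
    next
      case False
      then show ?thesis using c by auto
    qed
  qed
qed simp

theorem corollary2:
  fixes n :: nat and M :: int and w :: "nat \<Rightarrow> nat \<Rightarrow> real" and x0 :: "nat \<Rightarrow> int"
  assumes "n \<ge> 1" and "M \<ge> 1" and "row_stochastic n w"
    and "\<forall>i\<in>{1..n}. x0 i \<in> {0..M}"
    and "\<exists>seq. legal_seq n w M 0 x0 seq \<and>
           (\<exists>t \<le> length seq. \<forall>i\<in>{1..n}. run x0 seq t i = 0)"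
  shows "\<exists>seq. legal_seq n w M 0 x0 seq \<and>
           (\<exists>t \<le> length seq. \<forall>i\<in>{1..n}. x0 i > 0 \<longrightarrow> run x0 seq t i = 1)"
proof -
  obtain seq t where L: "legal_seq n w M 0 x0 seq" and t: "t \<le> length seq"
    and Z: "\<forall>i\<in>{1..n}. run x0 seq t i = 0" using assms(5) by blast
  have pos: "\<forall>j. x0 j > 0 \<longrightarrow> x0 j \<ge> 1" by auto
  define seq' where "seq' = map (gmap n x0) seq"
  have R: "\<And>s. run x0 seq' s = clip n x0 (run x0 seq s)"
    unfolding seq'_def by (rule run_clip[OF pos])
  have "legal_seq n w M 0 x0 seq'"
    unfolding legal_seq_def
  proof (intro allI impI)
    fix s assume s': "s < length seq'"
    then have s: "s < length seq" by (simp add: seq'_def)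
    define i where "i = fst (seq ! s)"
    define z where "z = snd (seq ! s)"
    define x where "x = run x0 seq s"
    have inv: "\<forall>j\<in>{1..n}. 0 \<le> x j \<and> x j \<le> x0 j"
      unfolding x_def using invariant[OF L assms(4), of s] s by simp
    from L s have i: "i \<in> {1..n}" and zP: "z \<in> P_set n w M 0 i x"
      unfolding legal_seq_def i_def z_def x_def by auto
    have z0: "0 \<le> z" "z \<le> M" "z \<le> x i" "C_social n w i z x \<le> C_social n w i (x i) x"
      using zP inv i unfolding P_set_def by auto
    have xiM: "x i \<le> M" using inv i assms(4) by force
    have e1: "fst (seq' ! s) = i" using s by (simp add: seq'_def gmap_def i_def)
    have e2: "snd (seq' ! s) = (if x0 i > 0 then max z 1 else z)"
      using s i by (simp add: seq'_def gmap_def i_def z_def)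
    have e3: "run x0 seq' s = clip n x0 x" by (simp add: R x_def)
    have ci: "clip n x0 x i = (if x0 i > 0 then max (x i) 1 else x i)"
      using i by (simp add: clip_def)
    let ?W = "(\<Sum>j=1..n. w i j * (if x0 j > 0 \<and> x j < 1 then 1 else 0))"
    have xnn: "\<forall>j\<in>{1..n}. x j \<ge> 0" using inv by auto
    have "(if x0 i > 0 then max z 1 else z) \<in> P_set n w M 0 i (clip n x0 x)"
    proof (cases "x0 i > 0")
      case False
      then have "x i = 0" "z = 0" using inv i z0 by force+
      then show ?thesis using False ci assms(2) by (simp add: P_set_def)
    next
      case True
      show ?thesis
      proof (cases "x i \<ge> 1")
        case False
        then have "x i = 0" "z = 0" using inv i z0 by force+
        then show ?thesis using True ci assms(2) by (simp add: P_set_def)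
      next
        case xi1: True
        have cxi: "clip n x0 x i = x i" using ci xi1 by simp
        have A: "C_social n w i (x i) (clip n x0 x) = C_social n w i (x i) x - ?W"
          by (rule C_clip[OF xi1 xnn])
        show ?thesis
        proof (cases "z \<ge> 1")
          case True
          have "C_social n w i z (clip n x0 x) = C_social n w i z x - ?W"
            by (rule C_clip[OF True xnn])
          then show ?thesis using True \<open>0 < x0 i\<close> cxi A z0 by (simp add: P_set_def)
        next
          case False
          then have "z = 0" using z0 by simp
          have "C_social n w i 1 (clip n x0 x) = C_social n w i 1 x - ?W"
            by (rule C_clip[OF _ xnn]) simp
          moreover have "C_social n w i 1 x \<le> C_social n w i (x i) x"
            using conv_step[OF assms(3) i xi1] z0 \<open>z = 0\<close> by simp
          ultimately show ?thesis using \<open>0 < x0 i\<close> cxi A \<open>z = 0\<close> xi1 assms(2)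
            by (simp add: P_set_def)
        qed
      qed
    qed
    then show "fst (seq' ! s) \<in> {1..n} \<and>
          snd (seq' ! s) \<in> P_set n w M 0 (fst (seq' ! s)) (run x0 seq' s)"
      using e1 e2 e3 i by simp
  qed
  moreover have "t \<le> length seq'" using t by (simp add: seq'_def)
  moreover have "\<forall>i\<in>{1..n}. x0 i > 0 \<longrightarrow> run x0 seq' t i = 1"
    using Z by (simp add: R clip_def)
  ultimately show ?thesis by blast
qed

end
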